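(* For $i=1,2$ let $f_i:H_0\to H_i$ be homomorphisms of free left $\bar k[\sigma]$-modules of finite rank, with $H_0,H_1,H_2$ all of the same rank. Assume $f_1\bmod\sigma$ is bijective and $\ker(f_1\bmod(\sigma-1))\subset\ker(f_2\bmod(\sigma-1))$. Then there is a unique homomorphism of left $\bar k[\sigma]$-modules $g:H_1\to H_2$ with $g\circ f_1=f_2$.
   Context: $\bar k$ is the algebraic closure of $k=\mathbb F_q(T)$. $\bar k[\sigma]$ is the noncommutative polynomial ring in $\sigma$ with $\sigma x=x^{q^{-1}}\sigma$ for $x\in\bar k$. For a homomorphism $f:H\to H'$ of left $\bar k[\sigma]$-modules, $f\bmod\sigma:H/\sigma H\to H'/\sigma H'$ and $f\bmod(\sigma-1):H/(\sigma-1)H\to H'/(\sigma-1)H'$ are the induced maps. *)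

theory Defs
  imports "HOL-Algebra.Algebraic_Closure_Type" "HOL-Computational_Algebra.Fraction_Field"
begin

text \<open>kbar = algebraic closure of F_q(T), where F_q is a finite field type 'f
  (q = CARD('f)) and F_q(T) is the fraction field of 'f poly.\<close>
type_synonym 'f kbar = "'f poly fract alg_closure"

text \<open>The inverse Frobenius x |-> x^(1/q) (unique q-th root in a perfect field).\<close>
definition qroot :: "nat \<Rightarrow> 'a::field \<Rightarrow> 'a" where
  "qroot q x = (THE y. y ^ q = x)"

text \<open>Elements of kbar[sigma] are stored as polynomials: p stands for
  sum_i (coeff p i) sigma^i.  Addition is the usual one; multiplication is
  twisted by sigma x = x^(1/q) sigma, i.e.
  (a sigma^i)(b sigma^j) = a b^(q^-i) sigma^(i+j).\<close>
definition skew_mult :: "nat \<Rightarrow> 'a::field poly \<Rightarrow> 'a poly \<Rightarrow> 'a poly" where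
  "skew_mult q p r =
     (\<Sum>i\<le>degree p. \<Sum>j\<le>degree r. monom (coeff p i * (qroot q ^^ i) (coeff r j)) (i + j))"

definition sigma :: "'a::field poly" where
  "sigma = monom 1 1"

text \<open>The free left kbar[sigma]-module of rank n: vectors indexed by {..<n}.\<close>
definition Vn :: "nat \<Rightarrow> (nat \<Rightarrow> 'a::field poly) set" where
  "Vn n = {v. \<forall>i\<ge>n. v i = 0}"

definition vadd :: "(nat \<Rightarrow> 'a::field poly) \<Rightarrow> (nat \<Rightarrow> 'a poly) \<Rightarrow> nat \<Rightarrow> 'a poly" where
  "vadd v w = (\<lambda>i. v i + w i)"

definition vdiff :: "(nat \<Rightarrow> 'a::field poly) \<Rightarrow> (nat \<Rightarrow> 'a poly) \<Rightarrow> nat \<Rightarrow> 'a poly" where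
  "vdiff v w = (\<lambda>i. v i - w i)"

definition vsmult :: "nat \<Rightarrow> 'a::field poly \<Rightarrow> (nat \<Rightarrow> 'a poly) \<Rightarrow> nat \<Rightarrow> 'a poly" where
  "vsmult q r v = (\<lambda>i. skew_mult q r (v i))"

definition skew_hom :: "nat \<Rightarrow> nat \<Rightarrow> nat \<Rightarrow> ((nat \<Rightarrow> 'a::field poly) \<Rightarrow> (nat \<Rightarrow> 'a poly)) \<Rightarrow> bool" where
  "skew_hom q n m f \<longleftrightarrow>
     (\<forall>x\<in>Vn n. f x \<in> Vn m) \<and>
     (\<forall>x\<in>Vn n. \<forall>y\<in>Vn n. f (vadd x y) = vadd (f x) (f y)) \<and>
     (\<forall>r. \<forall>x\<in>Vn n. f (vsmult q r x) = vsmult q r (f x))"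

definition submod :: "nat \<Rightarrow> nat \<Rightarrow> 'a::field poly \<Rightarrow> (nat \<Rightarrow> 'a poly) set" where
  "submod q n P = vsmult q P ` Vn n"

text \<open>f mod P : H/PH -> H'/PH' is bijective (unfolded on representatives).\<close>
definition mod_bij :: "nat \<Rightarrow> nat \<Rightarrow> nat \<Rightarrow> 'a::field poly \<Rightarrow> ((nat \<Rightarrow> 'a poly) \<Rightarrow> (nat \<Rightarrow> 'a poly)) \<Rightarrow> bool" where
  "mod_bij q n m P f \<longleftrightarrow>
     (\<forall>x\<in>Vn n. \<forall>y\<in>Vn n. vdiff (f x) (f y) \<in> submod q m P \<longrightarrow> vdiff x y \<in> submod q n P) \<and>
     (\<forall>z\<in>Vn m. \<exists>x\<in>Vn n. vdiff z (f x) \<in> submod q m P)"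

text \<open>ker(f1 mod P) \<subseteq> ker(f2 mod P) (unfolded on representatives).\<close>
definition mod_ker_sub :: "nat \<Rightarrow> nat \<Rightarrow> nat \<Rightarrow> nat \<Rightarrow> 'a::field poly \<Rightarrow>
    ((nat \<Rightarrow> 'a poly) \<Rightarrow> (nat \<Rightarrow> 'a poly)) \<Rightarrow> ((nat \<Rightarrow> 'a poly) \<Rightarrow> (nat \<Rightarrow> 'a poly)) \<Rightarrow> bool" where
  "mod_ker_sub q n m1 m2 P f1 f2 \<longleftrightarrow>
     (\<forall>x\<in>Vn n. f1 x \<in> submod q m1 P \<longrightarrow> f2 x \<in> submod q m2 P)"

end

theory Submission
  imports Defs
begin


locale skw =
  fixes q :: nat and T :: "'a::alg_closed_field itself"
  assumes q_gt1: "q > 1"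
  and frob_add: "\<And>x y :: 'a. (x + y) ^ q = x ^ q + y ^ q"
  and q_zero: "of_nat q = (0::'a)"
begin

abbreviation th :: "'a \<Rightarrow> 'a" where "th \<equiv> qroot q"
abbreviation sm :: "'a poly \<Rightarrow> 'a poly \<Rightarrow> 'a poly" where "sm \<equiv> skew_mult q"

lemma q_pos: "q > 0" using q_gt1 by simp

lemma frob_neg: "(- x :: 'a) ^ q = - (x ^ q)"
proof -
  have "(x + - x) ^ q = x ^ q + (-x) ^ q" by (rule frob_add)
  then have "x ^ q + (-x) ^ q = 0" using q_pos by (simp add: zero_power)
  then show ?thesis by (simp add: eq_neg_iff_add_eq_0 add.commute)
qed

lemma frob_diff: "(x - y :: 'a) ^ q = x ^ q - y ^ q"
  using frob_add[of x "-y"] frob_neg[of y] by simp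

lemma frob_inj: "(x :: 'a) ^ q = y ^ q \<Longrightarrow> x = y"
  using frob_diff[of x y] q_pos by simp

lemma frob_ex1: "\<exists>!y::'a. y ^ q = x"
  using nth_root_exists[OF q_pos, of x] frob_inj by blast

lemma th_pow [simp]: "th x ^ q = x"
  unfolding qroot_def using theI'[OF frob_ex1] .

lemma th_of_pow [simp]: "th (x ^ q) = x"
  unfolding qroot_def by (rule the_equality) (auto dest: frob_inj)

lemma th_eqI: "y ^ q = x \<Longrightarrow> th x = y"
  using th_of_pow by blast

lemma th_add [simp]: "th (x + y) = th x + th y"
  by (rule th_eqI) (simp add: frob_add)

lemma th_mult [simp]: "th (x * y) = th x * th y"
  by (rule th_eqI) (simp add: power_mult_distrib)

lemma th_0 [simp]: "th 0 = 0"
  by (rule th_eqI) (use q_pos in simp)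

lemma th_1 [simp]: "th 1 = 1"
  by (rule th_eqI) simp

lemma th_neg [simp]: "th (- x) = - th x"
  by (rule th_eqI) (simp add: frob_neg)

lemma th_diff [simp]: "th (x - y) = th x - th y"
  by (rule th_eqI) (simp add: frob_diff)

lemma th_eq_0_iff [simp]: "th x = 0 \<longleftrightarrow> x = 0"
  by (metis th_0 th_pow)

lemma frob_pow_add: "(x + y :: 'a) ^ (q ^ i) = x ^ (q ^ i) + y ^ (q ^ i)"
  by (induction i arbitrary: x y) (simp_all add: power_mult frob_add)

lemma frob_pow_neg: "(- x :: 'a) ^ (q ^ i) = - (x ^ (q ^ i))"
  by (induction i arbitrary: x) (simp_all add: power_mult frob_neg)

lemma frob_pow_diff: "(x - y :: 'a) ^ (q ^ i) = x ^ (q ^ i) - y ^ (q ^ i)"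
  using frob_pow_add[of x "-y" i] frob_pow_neg[of y i] by simp

lemma thi_add [simp]: "(th ^^ i) (x + y) = (th ^^ i) x + (th ^^ i) y"
  by (induction i) simp_all
lemma thi_mult [simp]: "(th ^^ i) (x * y) = (th ^^ i) x * (th ^^ i) y"
  by (induction i) simp_all
lemma thi_0 [simp]: "(th ^^ i) 0 = 0"
  by (induction i) simp_all
lemma thi_1 [simp]: "(th ^^ i) 1 = 1"
  by (induction i) simp_all
lemma thi_neg [simp]: "(th ^^ i) (- x) = - (th ^^ i) x"
  by (induction i) simp_all
lemma thi_diff [simp]: "(th ^^ i) (x - y) = (th ^^ i) x - (th ^^ i) y"
  by (induction i) simp_all
lemma thi_eq_0_iff [simp]: "(th ^^ i) x = 0 \<longleftrightarrow> x = 0"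
  by (induction i) simp_all
lemma thi_sum: "(th ^^ i) (\<Sum>j\<in>A. f j) = (\<Sum>j\<in>A. (th ^^ i) (f j))"
  by (induction A rule: infinite_finite_induct) simp_all
lemma thi_pow [simp]: "((th ^^ i) x) ^ (q ^ i) = x"
proof (induction i arbitrary: x)
  case (Suc i)
  have "((th ^^ Suc i) x) ^ (q ^ Suc i) = (((th ^^ i) (th x)) ^ (q ^ i)) ^ q"
    by (simp add: funpow_Suc_right power_mult[symmetric] mult.commute del: funpow.simps)
  also have "\<dots> = x" using Suc by simp
  finally show ?case .
qed simp
lemma thi_of_pow [simp]: "(th ^^ i) (x ^ (q ^ i)) = x"
proof (induction i arbitrary: x)
  case (Suc i)
  have "(th ^^ Suc i) (x ^ (q ^ Suc i)) = th ((th ^^ i) ((x ^ q) ^ (q ^ i)))"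
    by (simp add: power_mult mult.commute)
  also have "\<dots> = x" using Suc by simp
  finally show ?case .
qed simp

end


context skw begin

lemma sm_def': "sm p r = (\<Sum>i\<le>degree p. \<Sum>j\<le>degree r. monom (coeff p i * (th ^^ i) (coeff r j)) (i + j))"
  by (simp add: skew_mult_def)

lemma coeff_sm: "coeff (sm p r) k = (\<Sum>i\<le>k. coeff p i * (th ^^ i) (coeff r (k - i)))"
proof -
  define N where "N = degree p + degree r + k"
  define F where "F i j = (if i + j = k then coeff p i * (th ^^ i) (coeff r j) else 0)" for i j
  have "coeff (sm p r) k = (\<Sum>i\<le>degree p. \<Sum>j\<le>degree r. F i j)"
    by (simp add: sm_def' coeff_sum F_def)
  also have "\<dots> = (\<Sum>i\<le>N. \<Sum>j\<le>degree r. F i j)"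
  proof (rule sum.mono_neutral_left)
    show "\<forall>i\<in>{..N} - {..degree p}. (\<Sum>j\<le>degree r. F i j) = 0"
    proof
      fix i assume "i \<in> {..N} - {..degree p}"
      then have "coeff p i = 0" by (simp add: coeff_eq_0)
      then have "F i j = 0" for j by (simp add: F_def)
      then show "(\<Sum>j\<le>degree r. F i j) = 0" by simp
    qed
  qed (auto simp: N_def)
  also have "\<dots> = (\<Sum>i\<le>N. \<Sum>j\<le>N. F i j)"
    by (rule sum.cong[OF refl], rule sum.mono_neutral_left) (auto simp: N_def F_def coeff_eq_0)
  also have "\<dots> = (\<Sum>i\<le>N. if i \<le> k then coeff p i * (th ^^ i) (coeff r (k - i)) else 0)"
  proof (rule sum.cong[OF refl])
    fix i assume "i \<in> {..N}"
    have "(\<Sum>j\<le>N. F i j) = (\<Sum>j\<le>N. if j = k - i then (if i \<le> k then coeff p i * (th ^^ i) (coeff r (k - i)) else 0) else 0)"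
      by (rule sum.cong) (auto simp: F_def)
    also have "\<dots> = (if i \<le> k then coeff p i * (th ^^ i) (coeff r (k - i)) else 0)"
      by (auto simp: N_def)
    finally show "(\<Sum>j\<le>N. F i j) = (if i \<le> k then coeff p i * (th ^^ i) (coeff r (k - i)) else 0)" .
  qed
  also have "\<dots> = (\<Sum>i\<le>k. coeff p i * (th ^^ i) (coeff r (k - i)))"
    by (subst sum.inter_filter[symmetric]) (auto intro!: sum.cong simp: N_def)
  finally show ?thesis .
qed

lemma sm_add_left: "sm (p + p') r = sm p r + sm p' r"
  by (rule poly_eqI) (simp add: coeff_sm sum.distrib distrib_right)
lemma sm_add_right: "sm p (r + r') = sm p r + sm p r'"
  by (rule poly_eqI) (simp add: coeff_sm sum.distrib distrib_left)
lemma sm_0_left [simp]: "sm 0 r = 0"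
  by (rule poly_eqI) (simp add: coeff_sm)
lemma sm_0_right [simp]: "sm p 0 = 0"
  by (rule poly_eqI) (simp add: coeff_sm)
lemma sm_neg_left: "sm (- p) r = - sm p r"
  by (rule poly_eqI) (simp add: coeff_sm sum_negf)
lemma sm_neg_right: "sm p (- r) = - sm p r"
  by (rule poly_eqI) (simp add: coeff_sm sum_negf)
lemma sm_diff_left: "sm (p - p') r = sm p r - sm p' r"
  by (rule poly_eqI) (simp add: coeff_sm sum_subtractf left_diff_distrib)
lemma sm_diff_right: "sm p (r - r') = sm p r - sm p r'"
  by (rule poly_eqI) (simp add: coeff_sm sum_subtractf right_diff_distrib)
lemma sm_sum_left: "sm (\<Sum>i\<in>A. f i) r = (\<Sum>i\<in>A. sm (f i) r)"
  by (induction A rule: infinite_finite_induct) (simp_all add: sm_add_left)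
lemma sm_sum_right: "sm p (\<Sum>i\<in>A. f i) = (\<Sum>i\<in>A. sm p (f i))"
  by (induction A rule: infinite_finite_induct) (simp_all add: sm_add_right)

lemma coeff_sm_monom_left: "coeff (sm (monom c m) r) k = (if m \<le> k then c * (th ^^ m) (coeff r (k - m)) else 0)"
proof -
  have "coeff (sm (monom c m) r) k = (\<Sum>i\<le>k. if i = m then c * (th ^^ m) (coeff r (k - m)) else 0)"
    unfolding coeff_sm by (rule sum.cong) (auto simp: coeff_monom)
  also have "\<dots> = (if m \<le> k then c * (th ^^ m) (coeff r (k - m)) else 0)"
    by simp
  finally show ?thesis .
qed

lemma coeff_sm_monom_right: "coeff (sm p (monom c m)) k = (if m \<le> k then coeff p (k - m) * (th ^^ (k - m)) c else 0)"
proof -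
  have "coeff (sm p (monom c m)) k = (\<Sum>i\<le>k. if i = k - m \<and> m \<le> k then coeff p (k - m) * (th ^^ (k - m)) c else 0)"
    unfolding coeff_sm by (rule sum.cong) (auto simp: coeff_monom)
  also have "\<dots> = (if m \<le> k then coeff p (k - m) * (th ^^ (k - m)) c else 0)"
    by (cases "m \<le> k") simp_all
  finally show ?thesis .
qed

lemma sm_const_left: "sm [:c:] r = smult c r"
proof -
  have "sm (monom c 0) r = smult c r"
    by (rule poly_eqI) (subst coeff_sm_monom_left, simp)
  then show ?thesis by (simp add: monom_0)
qed

lemma sm_one_left [simp]: "sm 1 r = r"
  using sm_const_left[of 1 r] by (simp add: one_pCons)

lemma sm_one_right [simp]: "sm p 1 = p"
proof -
  have "sm p (monom 1 0) = p"
    by (rule poly_eqI) (subst coeff_sm_monom_right, simp)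
  then show ?thesis by (simp add: one_pCons monom_0)
qed

lemma coeff_sm_sigma: "coeff (sm sigma r) k = (if k = 0 then 0 else th (coeff r (k - 1)))"
  unfolding sigma_def coeff_sm_monom_left by auto

lemma smult_sm: "smult c (sm p r) = sm (smult c p) r"
  by (rule poly_eqI) (simp add: coeff_sm sum_distrib_left mult.assoc)

lemma coeff_sm_0: "coeff (sm p r) 0 = coeff p 0 * coeff r 0"
  by (simp add: coeff_sm)

lemma sm_assoc: "sm (sm p r) s = sm p (sm r s)"
proof (rule poly_eqI)
  fix k
  define G where "G a b = coeff p a * (th ^^ a) (coeff r b) * (th ^^ (a + b)) (coeff s (k - (a + b)))" for a b
  have "coeff (sm (sm p r) s) k = (\<Sum>i\<le>k. \<Sum>a\<le>i. G a (i - a))"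
    unfolding coeff_sm sum_distrib_right G_def
    by (intro sum.cong refl) auto
  also have "\<dots> = (\<Sum>(a, b)\<in>{(a, b). a + b \<le> k}. G a b)"
    by (rule sum.triangle_reindex_eq[symmetric])
  also have "{(a, b). a + b \<le> k} = Sigma {..k} (\<lambda>a. {..k - a})"
    by auto
  also have "(\<Sum>(a, b)\<in>Sigma {..k} (\<lambda>a. {..k - a}). G a b) = (\<Sum>a\<le>k. \<Sum>b\<le>k - a. G a b)"
    by (rule sum.Sigma[symmetric]) auto
  also have "\<dots> = coeff (sm p (sm r s)) k"
    unfolding coeff_sm thi_sum sum_distrib_left G_def
    by (intro sum.cong refl) (simp add: funpow_add mult.assoc diff_diff_left)
  finally show "coeff (sm (sm p r) s) k = coeff (sm p (sm r s)) k" .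
qed

lemma coeff_sm_high:
  assumes "k > degree p + degree r"
  shows "coeff (sm p r) k = 0"
  unfolding coeff_sm
proof (rule sum.neutral, rule ballI)
  fix i assume "i \<in> {..k}"
  show "coeff p i * (th ^^ i) (coeff r (k - i)) = 0"
  proof (cases "i > degree p")
    case True then show ?thesis by (simp add: coeff_eq_0)
  next
    case False
    then have "k - i > degree r" using assms by linarith
    then show ?thesis by (simp add: coeff_eq_0)
  qed
qed

lemma coeff_sm_top: "coeff (sm p r) (degree p + degree r) = lead_coeff p * (th ^^ degree p) (lead_coeff r)"
proof -
  have "coeff (sm p r) (degree p + degree r) =
    (\<Sum>i\<le>degree p + degree r. if i = degree p then lead_coeff p * (th ^^ degree p) (lead_coeff r) else 0)"
    unfolding coeff_sm
  proof (rule sum.cong[OF refl])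
    fix i assume "i \<in> {..degree p + degree r}"
    show "coeff p i * (th ^^ i) (coeff r (degree p + degree r - i)) =
      (if i = degree p then lead_coeff p * (th ^^ degree p) (lead_coeff r) else 0)"
    proof (cases "i = degree p")
      case False
      then have "i > degree p \<or> degree p + degree r - i > degree r" by linarith
      then show ?thesis using False by (auto simp: coeff_eq_0)
    qed simp
  qed
  also have "\<dots> = lead_coeff p * (th ^^ degree p) (lead_coeff r)" by simp
  finally show ?thesis .
qed

lemma sm_degree:
  assumes "p \<noteq> 0" "r \<noteq> 0"
  shows "degree (sm p r) = degree p + degree r" and "sm p r \<noteq> 0"
proof -
  have c: "coeff (sm p r) (degree p + degree r) \<noteq> 0"
    using assms by (simp add: coeff_sm_top)
  have "degree (sm p r) \<le> degree p + degree r"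
    by (rule degree_le) (auto intro: coeff_sm_high)
  moreover have "degree (sm p r) \<ge> degree p + degree r"
    using c by (rule le_degree)
  ultimately show "degree (sm p r) = degree p + degree r" by simp
  show "sm p r \<noteq> 0" using c by auto
qed

lemma sm_eq_0_iff: "sm p r = 0 \<longleftrightarrow> p = 0 \<or> r = 0"
  using sm_degree(2) by auto

end


context skw begin

definition phi :: "'a poly \<Rightarrow> 'a" where
  "phi r = (\<Sum>i\<le>degree r. coeff r i ^ (q ^ i))"

definition Pol :: "'a poly \<Rightarrow> 'a poly" where
  "Pol r = (\<Sum>i\<le>degree r. monom (coeff r i ^ (q ^ i)) (q ^ i))"

lemma qpow_pos: "q ^ i > 0" using q_pos by simp

lemma phi_bound:
  assumes "degree r \<le> N"
  shows "phi r = (\<Sum>i\<le>N. coeff r i ^ (q ^ i))"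
  unfolding phi_def
  by (rule sum.mono_neutral_left) (use assms qpow_pos in \<open>auto simp: coeff_eq_0 zero_power\<close>)

lemma Pol_bound:
  assumes "degree r \<le> N"
  shows "Pol r = (\<Sum>i\<le>N. monom (coeff r i ^ (q ^ i)) (q ^ i))"
  unfolding Pol_def
  by (rule sum.mono_neutral_left) (use assms qpow_pos in \<open>auto simp: coeff_eq_0 zero_power\<close>)

lemma phi_add: "phi (r + s) = phi r + phi s"
proof -
  define N where "N = max (degree r) (degree s)"
  have "phi (r + s) = (\<Sum>i\<le>N. coeff (r + s) i ^ (q ^ i))"
    by (rule phi_bound) (simp add: N_def degree_add_le)
  also have "\<dots> = (\<Sum>i\<le>N. coeff r i ^ (q ^ i)) + (\<Sum>i\<le>N. coeff s i ^ (q ^ i))"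
    by (simp add: frob_pow_add sum.distrib)
  also have "\<dots> = phi r + phi s"
    using phi_bound[of r N] phi_bound[of s N] by (simp add: N_def)
  finally show ?thesis .
qed

lemma phi_0 [simp]: "phi 0 = 0"
  by (simp add: phi_def zero_power qpow_pos)

lemma phi_neg: "phi (- r) = - phi r"
  using phi_add[of r "-r"] by (simp add: eq_neg_iff_add_eq_0 add.commute)

lemma phi_diff: "phi (r - s) = phi r - phi s"
  using phi_add[of r "-s"] phi_neg[of s] by simp

lemma phi_sum: "phi (\<Sum>i\<in>A. f i) = (\<Sum>i\<in>A. phi (f i))"
  by (induction A rule: infinite_finite_induct) (simp_all add: phi_add)

lemma phi_const [simp]: "phi [:c:] = c"
  by (simp add: phi_def)

lemma poly_Pol: "poly (Pol r) c = (\<Sum>i\<le>degree r. coeff r i ^ (q ^ i) * c ^ (q ^ i))"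
  by (simp add: Pol_def poly_sum poly_monom)

lemma phi_smult: "phi (smult c r) = poly (Pol r) c"
proof -
  have "phi (smult c r) = (\<Sum>i\<le>degree r. coeff (smult c r) i ^ (q ^ i))"
    by (rule phi_bound) (simp add: degree_smult_le)
  then show ?thesis by (simp add: poly_Pol power_mult_distrib mult.commute)
qed

lemma poly_Pol_0 [simp]: "poly (Pol r) 0 = 0"
  using q_pos by (simp add: poly_Pol power_0_left)

lemma degree_sm_sigma: "degree (sm sigma w) \<le> Suc (degree w)"
  by (rule degree_le) (auto simp: coeff_sm_sigma coeff_eq_0)

lemma phi_sigma: "phi (sm sigma w) = phi w"
proof -
  have "phi (sm sigma w) = (\<Sum>k\<le>Suc (degree w). coeff (sm sigma w) k ^ (q ^ k))"
    by (rule phi_bound) (rule degree_sm_sigma)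
  also have "\<dots> = (\<Sum>k\<le>degree w. coeff (sm sigma w) (Suc k) ^ (q ^ Suc k))"
    by (subst sum.atMost_Suc_shift) (simp add: coeff_sm_sigma zero_power qpow_pos)
  also have "\<dots> = (\<Sum>k\<le>degree w. coeff w k ^ (q ^ k))"
    by (intro sum.cong refl) (simp add: coeff_sm_sigma power_mult)
  finally show ?thesis by (simp add: phi_def)
qed

lemma sm_sigma1: "sm (sigma - 1) w = sm sigma w - w"
  by (simp add: sm_diff_left)

lemma phi_sigma1 [simp]: "phi (sm (sigma - 1) w) = 0"
  by (simp add: sm_sigma1 phi_diff phi_sigma)

lemma sm_sigma_monom: "sm sigma (monom (c ^ q) k) = monom c (Suc k)"
  by (rule poly_eqI) (auto simp: coeff_sm_sigma coeff_monom)

lemma monom_congr: "\<exists>w. monom c k = sm (sigma - 1) w + [:c ^ (q ^ k):]"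
proof (induction k arbitrary: c)
  case 0
  then show ?case by (intro exI[of _ 0]) (simp add: monom_0)
next
  case (Suc k)
  obtain w' where w': "monom (c ^ q) k = sm (sigma - 1) w' + [:(c ^ q) ^ (q ^ k):]"
    using Suc by blast
  have "monom c (Suc k) = sm (sigma - 1) (monom (c ^ q) k) + monom (c ^ q) k"
    by (simp add: sm_sigma1 sm_sigma_monom)
  also have "\<dots> = sm (sigma - 1) (monom (c ^ q) k + w') + [:c ^ (q ^ Suc k):]"
    by (subst (2) w') (simp add: sm_add_right power_mult)
  finally show ?case by blast
qed

lemma const_sum: "(\<Sum>i\<in>A. [:f i:]) = [:\<Sum>i\<in>A. f i:]"
  by (induction A rule: infinite_finite_induct) simp_all

lemma congr_phi: "\<exists>w. r = sm (sigma - 1) w + [:phi r:]"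
proof -
  obtain W where W: "\<And>i. monom (coeff r i) i = sm (sigma - 1) (W i) + [:coeff r i ^ (q ^ i):]"
  proof -
    have "\<forall>i. \<exists>w. monom (coeff r i) i = sm (sigma - 1) w + [:coeff r i ^ (q ^ i):]"
      using monom_congr by blast
    then show ?thesis using that by metis
  qed
  have "r = (\<Sum>i\<le>degree r. monom (coeff r i) i)"
    by (simp add: poly_as_sum_of_monoms)
  also have "\<dots> = (\<Sum>i\<le>degree r. sm (sigma - 1) (W i) + [:coeff r i ^ (q ^ i):])"
    using W by simp
  also have "\<dots> = sm (sigma - 1) (\<Sum>i\<le>degree r. W i) + [:phi r:]"
    by (simp add: sum.distrib sm_sum_right const_sum phi_def)
  finally show ?thesis by blast
qed

lemma in_sigma1_iff: "(\<exists>w. r = sm (sigma - 1) w) \<longleftrightarrow> phi r = 0"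
  using congr_phi[of r] by auto

lemma phi_sm: "phi (sm r s) = poly (Pol s) (phi r)"
proof -
  obtain w where w: "r = sm (sigma - 1) w + [:phi r:]"
    using congr_phi by blast
  have "sm r s = sm (sigma - 1) (sm w s) + smult (phi r) s"
    by (subst w) (simp add: sm_add_left sm_assoc sm_const_left)
  then show ?thesis by (simp add: phi_add phi_smult)
qed

lemma in_sigma_iff: "(\<exists>w. r = sm sigma w) \<longleftrightarrow> coeff r 0 = 0"
proof
  assume "\<exists>w. r = sm sigma w"
  then show "coeff r 0 = 0" by (auto simp: coeff_sm_sigma)
next
  assume r0: "coeff r 0 = 0"
  obtain a r' where r: "r = pCons a r'" by (cases r)
  with r0 have r: "r = pCons 0 r'" by simp
  define w where "w = map_poly (\<lambda>x. x ^ q) r'"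
  have "r = sm sigma w"
  proof (rule poly_eqI)
    fix k
    show "coeff r k = coeff (sm sigma w) k"
      using q_pos by (cases k) (simp_all add: r w_def coeff_sm_sigma coeff_map_poly zero_power)
  qed
  then show "\<exists>w. r = sm sigma w" by blast
qed

end


context skw begin

lemma coeff_Pol_sum: "coeff (Pol r) n = (\<Sum>j\<le>degree r. if q ^ j = n then coeff r j ^ (q ^ j) else 0)"
  by (simp add: Pol_def coeff_sum coeff_monom)

lemma coeff_Pol_pow: "coeff (Pol r) (q ^ i) = coeff r i ^ (q ^ i)"
proof -
  define N where "N = max (degree r) i"
  have P: "Pol r = (\<Sum>j\<le>N. monom (coeff r j ^ (q ^ j)) (q ^ j))"
    by (rule Pol_bound) (simp add: N_def)
  have "coeff (Pol r) (q ^ i) = (\<Sum>j\<le>N. if j = i then coeff r i ^ (q ^ i) else 0)"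
    unfolding P coeff_sum coeff_monom
    using q_gt1 by (intro sum.cong refl) (auto simp: power_inject_exp)
  also have "\<dots> = coeff r i ^ (q ^ i)" by (simp add: N_def)
  finally show ?thesis .
qed

lemma Pol_eq_0_iff: "Pol r = 0 \<longleftrightarrow> r = 0"
proof
  assume "Pol r = 0"
  then have "coeff r i ^ (q ^ i) = 0" for i
    using coeff_Pol_pow[of r i] by simp
  then have "coeff r i = 0" for i by simp
  then show "r = 0" by (intro poly_eqI) simp
qed (simp add: Pol_def)

lemma Pol_degree:
  assumes "r \<noteq> 0"
  shows "degree (Pol r) = q ^ degree r"
proof (rule antisym)
  show "degree (Pol r) \<le> q ^ degree r"
  proof (rule degree_le, intro allI impI)
    fix n assume n: "q ^ degree r < n"
    have "q ^ j \<le> q ^ degree r" if "j \<le> degree r" for j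
      using q_gt1 that by (intro power_increasing) auto
    then show "coeff (Pol r) n = 0"
      unfolding coeff_Pol_sum using n by (intro sum.neutral) force
  qed
  show "q ^ degree r \<le> degree (Pol r)"
    by (rule le_degree) (use assms in \<open>simp add: coeff_Pol_pow\<close>)
qed

lemma pderiv_Pol: "pderiv (Pol r) = [:coeff r 0:]"
proof -
  have "pderiv (Pol r) = (\<Sum>i\<le>degree r. pderiv (monom (coeff r i ^ (q ^ i)) (q ^ i)))"
    unfolding Pol_def using higher_pderiv_sum[of 1] by simp
  also have "\<dots> = (\<Sum>i\<le>degree r. if i = 0 then [:coeff r 0:] else 0)"
    using q_zero by (intro sum.cong refl) (auto simp: pderiv_monom monom_0 of_nat_power)
  also have "\<dots> = [:coeff r 0:]" by simp
  finally show ?thesis .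
qed

lemma Pol_surj:
  assumes "r \<noteq> 0"
  shows "\<exists>c. poly (Pol r) c = t"
proof -
  have d: "degree (Pol r) > 0" using Pol_degree[OF assms] q_pos by simp
  have "degree (Pol r + [:-t:]) = degree (Pol r)"
    using d by (intro degree_add_eq_left) simp
  moreover have "Pol r - [:t:] = Pol r + [:-t:]" by (rule poly_eqI) (simp add: coeff_pCons split: nat.split)
  ultimately have "degree (Pol r - [:t:]) = degree (Pol r)" by metis
  with d obtain c where "poly (Pol r - [:t:]) c = 0"
    using alg_closed_imp_poly_has_root[of "Pol r - [:t:]"] by auto
  then show ?thesis by auto
qed

lemma Pol_roots_card:
  assumes r0: "coeff r 0 \<noteq> 0"
  shows "card {c. poly (Pol r) c = 0} = q ^ degree r"
proof -
  have rnz: "r \<noteq> 0" using r0 by auto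
  define P where "P = Pol r"
  have Pnz: "P \<noteq> 0" using rnz by (simp add: P_def Pol_eq_0_iff)
  obtain A where A: "size A = degree P" "P = smult (lead_coeff P) (\<Prod>x\<in>#A. [:-x, 1:])"
    using alg_closed_imp_factorization[OF Pnz] by blast
  have lc: "lead_coeff P \<noteq> 0" using Pnz by simp
  have cnt: "count A x \<le> 1" for x
  proof (rule ccontr)
    assume "\<not> count A x \<le> 1"
    then have "x \<in># A" using count_eq_zero_iff[of A x] by auto
    then obtain B where B: "A = add_mset x B" by (metis multi_member_split)
    with \<open>\<not> count A x \<le> 1\<close> have "x \<in># B" using count_eq_zero_iff[of B x] by auto
    then obtain C where C: "B = add_mset x C" by (metis multi_member_split)
    define a where "a = [:-x, 1:]"
    define Q where "Q = smult (lead_coeff P) (\<Prod>y\<in>#C. [:-y, 1:])"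
    have "P = a * (a * Q)"
      using A(2) by (simp add: B C a_def Q_def mult.assoc)
    then have "pderiv P = a * pderiv (a * Q) + (a * Q) * pderiv a"
      by (simp add: pderiv_mult)
    then have "poly (pderiv P) x = 0" by (simp add: a_def)
    moreover have "poly (pderiv P) x = coeff r 0" by (simp add: P_def pderiv_Pol)
    ultimately show False using r0 by simp
  qed
  have roots: "{c. poly P c = 0} = set_mset A"
  proof -
    have "poly P c = lead_coeff P * (\<Prod>y\<in>#A. c - y)" for c
      by (subst A(2)) (simp add: poly_prod_mset)
    then show ?thesis using lc by (auto simp: prod_mset_zero_iff)
  qed
  have "A = mset_set (set_mset A)"
  proof (rule multiset_eqI)
    fix x
    show "count A x = count (mset_set (set_mset A)) x"
    proof (cases "x \<in># A")
      case True
      then have "count A x = 1" using cnt[of x] count_eq_zero_iff[of A x] by linarith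
      then show ?thesis using True by (simp add: count_mset_set)
    next
      case False
      then show ?thesis by (simp add: count_mset_set count_eq_zero_iff)
    qed
  qed
  then have "size A = card (set_mset A)"
    by (metis size_mset_set)
  then show ?thesis using A(1) roots Pol_degree[OF rnz] by (simp add: P_def)
qed

lemma left_div:
  assumes a: "a \<noteq> 0"
  shows "\<exists>w s. z = sm a w + s \<and> (s = 0 \<or> degree s < degree a)"
proof (induction "degree z" arbitrary: z rule: less_induct)
  case less
  show ?case
  proof (cases "z = 0 \<or> degree z < degree a")
    case True
    then show ?thesis by (intro exI[of _ 0] exI[of _ z]) auto
  next
    case False
    then have znz: "z \<noteq> 0" and dz: "degree a \<le> degree z" by auto
    define d where "d = degree z - degree a"
    define c where "c = (lead_coeff z / lead_coeff a) ^ (q ^ degree a)"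
    have cnz: "c \<noteq> 0" using znz a by (simp add: c_def)
    define t where "t = monom c d"
    have tnz: "t \<noteq> 0" using cnz by (simp add: t_def)
    have dt: "degree t = d" using cnz by (simp add: t_def degree_monom_eq)
    have deg: "degree (sm a t) = degree z"
      using sm_degree(1)[OF a tnz] dt dz by (simp add: d_def)
    have top: "coeff (sm a t) (degree z) = lead_coeff z"
      using coeff_sm_top[of a t] dt dz a by (simp add: d_def t_def c_def)
    define z' where "z' = z - sm a t"
    have dz': "degree z' \<le> degree z"
      unfolding z'_def using deg by (intro degree_diff_le) auto
    have cz': "coeff z' (degree z) = 0"
      using top by (simp add: z'_def)
    show ?thesis
    proof (cases "z' = 0")
      case True
      then show ?thesis by (intro exI[of _ t] exI[of _ 0]) (simp add: z'_def)
    next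
      case False
      then have "degree z' < degree z"
        using dz' cz' by (metis le_neq_implies_less leading_coeff_0_iff)
      then obtain w s where ws: "z' = sm a w + s" "s = 0 \<or> degree s < degree a"
        using less by blast
      have "z = sm a (t + w) + s"
        using ws(1) by (simp add: z'_def sm_add_right algebra_simps)
      then show ?thesis using ws(2) by blast
    qed
  qed
qed

lemma right_div:
  assumes a: "a \<noteq> 0"
  shows "\<exists>w s. z = sm w a + s \<and> (s = 0 \<or> degree s < degree a)"
proof (induction "degree z" arbitrary: z rule: less_induct)
  case less
  show ?case
  proof (cases "z = 0 \<or> degree z < degree a")
    case True
    then show ?thesis by (intro exI[of _ 0] exI[of _ z]) auto
  next
    case False
    then have znz: "z \<noteq> 0" and dz: "degree a \<le> degree z" by auto
    define d where "d = degree z - degree a"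
    define c where "c = lead_coeff z / (th ^^ d) (lead_coeff a)"
    have cnz: "c \<noteq> 0" using znz a by (simp add: c_def)
    define t where "t = monom c d"
    have tnz: "t \<noteq> 0" using cnz by (simp add: t_def)
    have dt: "degree t = d" using cnz by (simp add: t_def degree_monom_eq)
    have deg: "degree (sm t a) = degree z"
      using sm_degree(1)[OF tnz a] dt dz by (simp add: d_def)
    have top: "coeff (sm t a) (degree z) = lead_coeff z"
      using coeff_sm_top[of t a] dt dz a by (simp add: d_def t_def c_def add.commute)
    define z' where "z' = z - sm t a"
    have dz': "degree z' \<le> degree z"
      unfolding z'_def using deg by (intro degree_diff_le) auto
    have cz': "coeff z' (degree z) = 0"
      using top by (simp add: z'_def)
    show ?thesis
    proof (cases "z' = 0")
      case True
      then show ?thesis by (intro exI[of _ t] exI[of _ 0]) (simp add: z'_def)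
    next
      case False
      then have "degree z' < degree z"
        using dz' cz' by (metis le_neq_implies_less leading_coeff_0_iff)
      then obtain w s where ws: "z' = sm w a + s" "s = 0 \<or> degree s < degree a"
        using less by blast
      have "z = sm (t + w) a + s"
        using ws(1) by (simp add: z'_def sm_add_left algebra_simps)
      then show ?thesis using ws(2) by blast
    qed
  qed
qed

lemma divisibility:
  assumes a0: "coeff a 0 \<noteq> 0"
    and K: "\<And>c. phi (smult c a) = 0 \<Longrightarrow> phi (smult c z) = 0"
  shows "\<exists>w. z = sm a w"
proof -
  have anz: "a \<noteq> 0" using a0 by auto
  obtain w s where ws: "z = sm a w + s" "s = 0 \<or> degree s < degree a"
    using left_div[OF anz] by blast
  have sub: "{c. poly (Pol a) c = 0} \<subseteq> {c. poly (Pol s) c = 0}"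
  proof
    fix c assume "c \<in> {c. poly (Pol a) c = 0}"
    then have ca: "phi (smult c a) = 0" by (simp add: phi_smult)
    have "phi (smult c z) = phi (sm (smult c a) w) + phi (smult c s)"
      by (simp add: ws(1) smult_add_right phi_add smult_sm)
    also have "phi (sm (smult c a) w) = 0" by (simp add: phi_sm ca)
    finally show "c \<in> {c. poly (Pol s) c = 0}" using K[OF ca] by (simp add: phi_smult)
  qed
  show ?thesis
  proof (cases "s = 0")
    case True then show ?thesis using ws by auto
  next
    case False
    then have dsa: "degree s < degree a" using ws by auto
    have Ps: "Pol s \<noteq> 0" using False by (simp add: Pol_eq_0_iff)
    have "q ^ degree a = card {c. poly (Pol a) c = 0}" by (simp add: Pol_roots_card a0)
    also have "\<dots> \<le> card {c. poly (Pol s) c = 0}"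
      by (rule card_mono[OF poly_roots_finite[OF Ps] sub])
    also have "\<dots> \<le> degree (Pol s)" by (rule card_poly_roots_bound[OF Ps])
    also have "\<dots> = q ^ degree s" by (rule Pol_degree[OF False])
    finally have "q ^ degree a \<le> q ^ degree s" .
    moreover have "q ^ degree s < q ^ degree a"
      using q_gt1 dsa by (intro power_strict_increasing) auto
    ultimately show ?thesis by simp
  qed
qed

end


type_synonym 'b vec = "nat \<Rightarrow> 'b poly"

context skw begin

definition smod :: "(nat \<Rightarrow> 'a poly) set \<Rightarrow> bool" where
  "smod M \<longleftrightarrow> M \<noteq> {} \<and> (\<forall>x\<in>M. \<forall>y\<in>M. vadd x y \<in> M) \<and> (\<forall>r. \<forall>x\<in>M. vsmult q r x \<in> M)"

definition slin :: "(nat \<Rightarrow> 'a poly) set \<Rightarrow> ((nat \<Rightarrow> 'a poly) \<Rightarrow> (nat \<Rightarrow> 'a poly)) \<Rightarrow> bool" where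
  "slin M f \<longleftrightarrow> (\<forall>x\<in>M. \<forall>y\<in>M. f (vadd x y) = vadd (f x) (f y)) \<and>
     (\<forall>r. \<forall>x\<in>M. f (vsmult q r x) = vsmult q r (f x))"

lemma vsmult_app [simp]: "vsmult q r (v :: 'a vec) j = sm r (v j)"
  by (simp add: vsmult_def)
lemma vadd_app [simp]: "vadd (v :: 'a vec) w j = v j + w j"
  by (simp add: vadd_def)
lemma vdiff_app [simp]: "vdiff (v :: 'a vec) w j = v j - w j"
  by (simp add: vdiff_def)

lemma Vn_iff: "(v :: 'a vec) \<in> Vn n \<longleftrightarrow> (\<forall>i\<ge>n. v i = 0)"
  by (simp add: Vn_def)

lemma submod_iff:
  assumes "\<And>r. (\<exists>w. r = sm P w) \<longleftrightarrow> C r"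
  shows "(v :: 'a vec) \<in> submod q n P \<longleftrightarrow> v \<in> Vn n \<and> (\<forall>j. C (v j))"
proof
  assume "v \<in> submod q n P"
  then obtain w where w: "w \<in> Vn n" "v = vsmult q P w" by (auto simp: submod_def)
  then show "v \<in> Vn n \<and> (\<forall>j. C (v j))"
    using assms by (auto simp: Vn_iff)
next
  assume v: "v \<in> Vn n \<and> (\<forall>j. C (v j))"
  define W where "W j = (if j < n then (SOME w. v j = sm P w) else 0)" for j
  have "W \<in> Vn n" by (simp add: W_def Vn_iff)
  moreover have "v = vsmult q P W"
  proof
    fix j show "v j = vsmult q P W j"
    proof (cases "j < n")
      case True
      have "\<exists>w. v j = sm P w" using v assms by blast
      then show ?thesis using True by (simp add: W_def) (rule someI_ex)
    next
      case False then show ?thesis using v by (simp add: W_def Vn_iff)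
    qed
  qed
  ultimately show "v \<in> submod q n P" by (auto simp: submod_def)
qed

lemma submod_sigma_iff: "(v :: 'a vec) \<in> submod q n sigma \<longleftrightarrow> v \<in> Vn n \<and> (\<forall>j. coeff (v j) 0 = 0)"
  by (rule submod_iff) (rule in_sigma_iff)

lemma submod_sigma1_iff: "(v :: 'a vec) \<in> submod q n (sigma - 1) \<longleftrightarrow> v \<in> Vn n \<and> (\<forall>j. phi (v j) = 0)"
  by (rule submod_iff) (rule in_sigma1_iff)

lemma sm_minus1 [simp]: "sm (-1) r = - r"
  by (simp add: sm_neg_left)

lemma vdiff_eq: "vdiff (x :: 'a vec) y = vadd x (vsmult q (-1) y)"
  by (auto simp: vdiff_def vadd_def vsmult_def)

lemma vzero_eq: "vsmult q 0 (x :: 'a vec) = (\<lambda>_. 0)"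
  by (auto simp: vsmult_def)

lemma smod_0: "smod M \<Longrightarrow> (\<lambda>_. 0 :: 'a poly) \<in> M"
proof -
  assume M: "smod M"
  then obtain x where x: "x \<in> M" unfolding smod_def by blast
  then have "vsmult q 0 x \<in> M" using M unfolding smod_def by blast
  then show ?thesis by (simp add: vzero_eq)
qed

lemma smod_add: "smod M \<Longrightarrow> x \<in> M \<Longrightarrow> y \<in> M \<Longrightarrow> vadd x y \<in> M"
  unfolding smod_def by blast

lemma smod_smult: "smod M \<Longrightarrow> x \<in> M \<Longrightarrow> vsmult q r x \<in> M"
  unfolding smod_def by blast

lemma smod_diff: "smod M \<Longrightarrow> x \<in> M \<Longrightarrow> y \<in> M \<Longrightarrow> vdiff x y \<in> M"
  unfolding vdiff_eq by (intro smod_add smod_smult)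

lemma slin_add: "slin M f \<Longrightarrow> x \<in> M \<Longrightarrow> y \<in> M \<Longrightarrow> f (vadd x y) = vadd (f x) (f y)"
  unfolding slin_def by blast

lemma slin_smult: "slin M f \<Longrightarrow> x \<in> M \<Longrightarrow> f (vsmult q r x) = vsmult q r (f x)"
  unfolding slin_def by blast

lemma slin_diff: "slin M f \<Longrightarrow> smod M \<Longrightarrow> x \<in> M \<Longrightarrow> y \<in> M \<Longrightarrow> f (vdiff x y) = vdiff (f x) (f y)"
proof -
  assume f: "slin M f" and M: "smod M" and x: "x \<in> M" and y: "y \<in> M"
  have "f (vdiff x y) = f (vadd x (vsmult q (-1) y))" by (simp only: vdiff_eq)
  also have "\<dots> = vadd (f x) (vsmult q (-1) (f y))"
    using slin_add[OF f x smod_smult[OF M y]] slin_smult[OF f y] by simp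
  also have "\<dots> = vdiff (f x) (f y)" by (simp only: vdiff_eq)
  finally show ?thesis .
qed

lemma slin_0: "slin M f \<Longrightarrow> smod M \<Longrightarrow> f (\<lambda>_. 0 :: 'a poly) = (\<lambda>_. 0)"
proof -
  assume f: "slin M f" and M: "smod M"
  obtain x where x: "x \<in> M" using M unfolding smod_def by blast
  have "f (vsmult q 0 x) = vsmult q 0 (f x)" using slin_smult[OF f x] .
  then show ?thesis by (simp add: vzero_eq)
qed

lemma smod_Vn: "smod (Vn n :: 'a vec set)"
  unfolding smod_def by (auto simp: Vn_iff)

lemma hom_slin: "skew_hom q n m (g :: 'a vec \<Rightarrow> 'a vec) \<Longrightarrow> slin (Vn n) g"
  by (simp add: skew_hom_def slin_def)

lemma hom_maps: "skew_hom q n m (g :: 'a vec \<Rightarrow> 'a vec) \<Longrightarrow> y \<in> Vn n \<Longrightarrow> g y \<in> Vn m"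
  by (simp add: skew_hom_def)

lemma infinite_UNIV_a: "infinite (UNIV :: 'a set)"
proof
  assume fin: "finite (UNIV :: 'a set)"
  define P :: "'a poly" where "P = (\<Prod>a\<in>UNIV. [:-a, 1:]) + 1"
  have "degree (\<Prod>a\<in>(UNIV :: 'a set). [:-a, 1:]) = card (UNIV :: 'a set)"
    by (subst degree_prod_sum_eq) auto
  moreover have "card (UNIV :: 'a set) > 0" using fin by (simp add: finite_UNIV_card_ge_0)
  ultimately have "degree P > 0"
    unfolding P_def by (subst degree_add_eq_left) auto
  then obtain x where "poly P x = 0" using alg_closed_imp_poly_has_root by blast
  moreover have "poly (\<Prod>a\<in>(UNIV :: 'a set). [:-a, 1:]) x = 0"
    using fin by (simp add: poly_prod)
  ultimately show False by (simp add: P_def)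
qed

lemma zero_lemma:
  assumes M: "smod M" and h: "slin M h" and H: "\<forall>x\<in>M. h x \<in> submod q m (sigma - 1)"
    and x: "x \<in> M"
  shows "h x = (\<lambda>_. 0)"
proof
  fix j
  have "poly (Pol (h x j)) c = 0" for c
  proof -
    have "vsmult q [:c:] x \<in> M" using smod_smult[OF M x] .
    then have "h (vsmult q [:c:] x) \<in> submod q m (sigma - 1)" using H by blast
    then have "phi (sm [:c:] (h x j)) = 0"
      using slin_smult[OF h x] by (simp add: submod_sigma1_iff)
    then show ?thesis by (simp add: sm_const_left phi_smult)
  qed
  then have "Pol (h x j) = 0"
    using poly_roots_finite[of "Pol (h x j)"] infinite_UNIV_a by auto
  then show "h x j = 0" by (simp add: Pol_eq_0_iff)
qed

end


context skw begin

lemma main: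
  fixes M :: "'a vec set" and f h :: "'a vec \<Rightarrow> 'a vec"
  assumes "smod M" "slin M f" "slin M h" "\<forall>x\<in>M. f x \<in> Vn n" "\<forall>x\<in>M. h x \<in> Vn m"
    "\<forall>y\<in>Vn n. \<exists>x\<in>M. vdiff y (f x) \<in> submod q n sigma"
    "\<forall>x\<in>M. f x \<in> submod q n (sigma - 1) \<longrightarrow> h x \<in> submod q m (sigma - 1)"
  shows "(\<exists>g. skew_hom q n m g \<and> (\<forall>x\<in>M. g (f x) = h x)) \<and>
         (\<forall>y\<in>Vn n. \<exists>x\<in>M. vdiff y (f x) \<in> submod q n (sigma - 1))"
  using assms
proof (induction n arbitrary: M f h)
  case 0
  note M = "0.prems"(1) and f = "0.prems"(2) and h = "0.prems"(3)
  have fx0: "f x = (\<lambda>_. 0)" if "x \<in> M" for x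
    using "0.prems"(4) that by (auto simp: Vn_iff)
  have H: "\<forall>x\<in>M. h x \<in> submod q m (sigma - 1)"
    using "0.prems"(7) fx0 by (auto simp: submod_sigma1_iff Vn_iff)
  have hx0: "h x = (\<lambda>_. 0)" if "x \<in> M" for x
    using zero_lemma[OF M h H that] .
  have g: "skew_hom q 0 m (\<lambda>_. (\<lambda>_. 0 :: 'a poly))"
    by (simp add: skew_hom_def Vn_iff vadd_def vsmult_def)
  moreover have "\<forall>x\<in>M. (\<lambda>_. (\<lambda>_. 0 :: 'a poly)) (f x) = h x"
    using hx0 by simp
  moreover have "\<forall>y\<in>Vn 0. \<exists>x\<in>M. vdiff y (f x) \<in> submod q 0 (sigma - 1)"
  proof
    fix y :: "'a vec" assume "y \<in> Vn 0"
    then have y: "y = (\<lambda>_. 0)" by (auto simp: Vn_iff)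
    obtain x where x: "x \<in> M" using M unfolding smod_def by blast
    show "\<exists>x\<in>M. vdiff y (f x) \<in> submod q 0 (sigma - 1)"
      using x fx0[OF x] y by (intro bexI[of _ x]) (auto simp: submod_sigma1_iff Vn_iff)
  qed
  ultimately show ?case by blast
next
  case (Suc n)
  note M = Suc.prems(1) and f = Suc.prems(2) and h = Suc.prems(3)
    and fV = Suc.prems(4) and hV = Suc.prems(5) and S = Suc.prems(6) and K = Suc.prems(7)
  define pi where "pi x = f x n" for x
  have fVs: "f x \<in> Vn (Suc n)" if "x \<in> M" for x using fV that by blast
  have f_add: "f (vadd x y) = vadd (f x) (f y)" if "x \<in> M" "y \<in> M" for x y
    using slin_add[OF f that] .
  have f_smult: "f (vsmult q r x) = vsmult q r (f x)" if "x \<in> M" for x r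
    using slin_smult[OF f that] .
  have f_diff: "f (vdiff x y) = vdiff (f x) (f y)" if "x \<in> M" "y \<in> M" for x y
    using slin_diff[OF f M that] .
  define e :: "'a vec" where "e = (\<lambda>j. if j = n then 1 else 0)"
  have "e \<in> Vn (Suc n)" by (simp add: e_def Vn_iff)
  then obtain x1 where x1: "x1 \<in> M" "vdiff e (f x1) \<in> submod q (Suc n) sigma"
    using S by blast
  then have x1c: "coeff (pi x1) 0 = 1"
    unfolding submod_sigma_iff by (auto simp: e_def pi_def dest!: spec[of _ n])
  have ex: "\<exists>x\<in>M. pi x \<noteq> 0" using x1 x1c by (intro bexI[of _ x1]) auto
  define d0 where "d0 = (LEAST d. \<exists>x\<in>M. pi x \<noteq> 0 \<and> degree (pi x) = d)"
  have "\<exists>x\<in>M. pi x \<noteq> 0 \<and> degree (pi x) = d0"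
    unfolding d0_def by (rule LeastI_ex) (use ex in blast)
  then obtain u where u: "u \<in> M" "pi u \<noteq> 0" "degree (pi u) = d0" by blast
  have minl: "d0 \<le> degree (pi x)" if "x \<in> M" "pi x \<noteq> 0" for x
    unfolding d0_def by (rule Least_le) (use that in blast)
  define a where "a = pi u"
  have anz: "a \<noteq> 0" using u by (simp add: a_def)
  have dec: "\<exists>r. pi x = sm r a" if x: "x \<in> M" for x
  proof -
    obtain r s where rs: "pi x = sm r a + s" "s = 0 \<or> degree s < degree a"
      using right_div[OF anz] by blast
    define x' where "x' = vdiff x (vsmult q r u)"
    have x'M: "x' \<in> M" unfolding x'_def by (intro smod_diff smod_smult M x u)
    have "pi x' = pi x - sm r a"
      unfolding x'_def pi_def a_def using x u M by (simp add: f_diff f_smult smod_smult)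
    then have "pi x' = s" using rs by simp
    have "s = 0"
    proof (rule ccontr)
      assume "s \<noteq> 0"
      then have "d0 \<le> degree s" using minl[OF x'M] \<open>pi x' = s\<close> by simp
      moreover have "degree s < d0" using rs \<open>s \<noteq> 0\<close> u by (simp add: a_def)
      ultimately show False by simp
    qed
    then show ?thesis using rs by (intro exI[of _ r]) simp
  qed
  have a0: "coeff a 0 \<noteq> 0"
  proof -
    obtain r where "pi x1 = sm r a" using dec[OF x1(1)] by blast
    then have "coeff r 0 * coeff a 0 = 1" using x1c by (simp add: coeff_sm_0)
    then show ?thesis by auto
  qed
  define N where "N = {x\<in>M. pi x = 0}"
  have NM: "N \<subseteq> M" by (auto simp: N_def)
  have N: "smod N"
  proof -
    have "(\<lambda>_. 0) \<in> N"
      using smod_0[OF M] slin_0[OF f M] by (simp add: N_def pi_def)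
    moreover have "vadd x y \<in> N" if "x \<in> N" "y \<in> N" for x y
      using that by (auto simp: N_def pi_def f_add smod_add[OF M])
    moreover have "vsmult q r x \<in> N" if "x \<in> N" for x r
      using that by (auto simp: N_def pi_def f_smult smod_smult[OF M])
    ultimately show ?thesis unfolding smod_def by blast
  qed
  have fN: "slin N f" using f NM unfolding slin_def by blast
  have hN: "slin N h" using h NM unfolding slin_def by blast
  have fVN: "\<forall>x\<in>N. f x \<in> Vn n"
  proof
    fix x assume "x \<in> N"
    then have "f x \<in> Vn (Suc n)" "f x n = 0" using fVs by (auto simp: N_def pi_def)
    then show "f x \<in> Vn n" by (auto simp: Vn_iff) (metis le_antisym not_less_eq_eq)
  qed
  have hVN: "\<forall>x\<in>N. h x \<in> Vn m" using hV NM by blast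
  have VnS: "(Vn n :: 'a vec set) \<subseteq> Vn (Suc n)" by (auto simp: Vn_iff)
  have SN: "\<forall>y\<in>Vn n. \<exists>x\<in>N. vdiff y (f x) \<in> submod q n sigma"
  proof
    fix y :: "'a vec" assume y: "y \<in> Vn n"
    then obtain x where x: "x \<in> M" "vdiff y (f x) \<in> submod q (Suc n) sigma"
      using S VnS by blast
    then have c0: "coeff (y j - f x j) 0 = 0" for j by (simp add: submod_sigma_iff)
    have "y n = 0" using y by (simp add: Vn_iff)
    then have "coeff (pi x) 0 = 0" using c0[of n] by (simp add: pi_def)
    obtain r where r: "pi x = sm r a" using dec[OF x(1)] by blast
    then have r0: "coeff r 0 = 0" using \<open>coeff (pi x) 0 = 0\<close> a0 by (simp add: coeff_sm_0)
    define x' where "x' = vdiff x (vsmult q r u)"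
    have x'M: "x' \<in> M" unfolding x'_def by (intro smod_diff smod_smult M x u)
    have fx': "f x' = vdiff (f x) (vsmult q r (f u))"
      unfolding x'_def using x u M by (simp add: f_diff f_smult smod_smult)
    have "pi x' = 0" using fx' r by (simp add: pi_def a_def)
    then have x'N: "x' \<in> N" using x'M by (simp add: N_def)
    have "vdiff y (f x') \<in> submod q n sigma"
      unfolding submod_sigma_iff
    proof
      show "vdiff y (f x') \<in> Vn n"
        using y fVN x'N by (auto simp: Vn_iff)
      show "\<forall>j. coeff (vdiff y (f x') j) 0 = 0"
        using c0 r0 by (simp add: fx' coeff_sm_0 algebra_simps)
    qed
    then show "\<exists>x\<in>N. vdiff y (f x) \<in> submod q n sigma" using x'N by blast
  qed
  have KN: "\<forall>x\<in>N. f x \<in> submod q n (sigma - 1) \<longrightarrow> h x \<in> submod q m (sigma - 1)"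
    using K NM VnS by (auto simp: submod_sigma1_iff)
  obtain g' where g': "skew_hom q n m g'" "\<forall>x\<in>N. g' (f x) = h x"
    and TN: "\<forall>y\<in>Vn n. \<exists>x\<in>N. vdiff y (f x) \<in> submod q n (sigma - 1)"
    using Suc.IH[OF N fN hN fVN hVN SN KN] by blast
  have g'V: "g' y \<in> Vn m" if "y \<in> Vn n" for y using hom_maps[OF g'(1) that] .
  have g'_add: "g' (vadd x y) = vadd (g' x) (g' y)" if "x \<in> Vn n" "y \<in> Vn n" for x y
    using slin_add[OF hom_slin[OF g'(1)] that] .
  have g'_smult: "g' (vsmult q r x) = vsmult q r (g' x)" if "x \<in> Vn n" for x r
    using slin_smult[OF hom_slin[OF g'(1)] that] .
  have g'_diff: "g' (vdiff x y) = vdiff (g' x) (g' y)" if "x \<in> Vn n" "y \<in> Vn n" for x y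
    using slin_diff[OF hom_slin[OF g'(1)] smod_Vn that] .
  have h_add: "h (vadd x y) = vadd (h x) (h y)" if "x \<in> M" "y \<in> M" for x y
    using slin_add[OF h that] .
  have h_smult: "h (vsmult q r x) = vsmult q r (h x)" if "x \<in> M" for x r
    using slin_smult[OF h that] .
  have h_diff: "h (vdiff x y) = vdiff (h x) (h y)" if "x \<in> M" "y \<in> M" for x y
    using slin_diff[OF h M that] .
  define restr :: "'a vec \<Rightarrow> 'a vec" where "restr y = (\<lambda>i. if i < n then y i else 0)" for y
  have restrV: "restr y \<in> Vn n" for y by (simp add: restr_def Vn_iff)
  have restr_id: "restr y = y" if "y \<in> Vn n" for y
    using that by (auto simp: restr_def Vn_iff)
  define fu' where "fu' = restr (f u)"
  define z where "z = vdiff (h u) (g' fu')"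
  have zV: "z \<in> Vn m" using hV u g'V[OF restrV] by (auto simp: z_def fu'_def Vn_iff)
  have zdiv: "\<exists>w. z j = sm a w" for j
  proof (rule divisibility[OF a0])
    fix c assume ca: "phi (smult c a) = 0"
    define cv where "cv = vsmult q [:c:] fu'"
    have cvV: "cv \<in> Vn n" using restrV[of "f u"] by (simp add: cv_def fu'_def Vn_iff)
    obtain x2 where x2: "x2 \<in> N" "vdiff cv (f x2) \<in> submod q n (sigma - 1)"
      using TN cvV by blast
    have x2M: "x2 \<in> M" using x2 NM by blast
    have fx2V: "f x2 \<in> Vn n" using fVN x2 by blast
    define x where "x = vdiff (vsmult q [:c:] u) x2"
    have xM: "x \<in> M" unfolding x_def by (intro smod_diff smod_smult M u x2M)
    have fx: "f x = vdiff (vsmult q [:c:] (f u)) (f x2)"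
      unfolding x_def using u x2M M by (simp add: f_diff f_smult smod_smult)
    have e0: "phi (cv j - f x2 j) = 0" for j using x2(2) by (simp add: submod_sigma1_iff)
    have "f x \<in> submod q (Suc n) (sigma - 1)"
      unfolding submod_sigma1_iff
    proof
      show "f x \<in> Vn (Suc n)" using fVs[OF xM] .
      show "\<forall>j. phi (f x j) = 0"
      proof
        fix j
        consider "j < n" | "j = n" | "j > n" by linarith
        then show "phi (f x j) = 0"
        proof cases
          case 1
          then show ?thesis using e0[of j] by (simp add: fx cv_def fu'_def restr_def)
        next
          case 2
          have "f x2 n = 0" using x2(1) by (simp add: N_def pi_def)
          then show ?thesis using 2 ca by (simp add: fx sm_const_left a_def pi_def)
        next
          case 3
          have "f u j = 0" "f x2 j = 0" using 3 fVs[OF u(1)] fVs[OF x2M] by (auto simp: Vn_iff)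
          then show ?thesis by (simp add: fx)
        qed
      qed
    qed
    then have "h x \<in> submod q m (sigma - 1)" using K xM by blast
    then have hx0: "phi (h x j) = 0" for j by (simp add: submod_sigma1_iff)
    have hx: "h x = vdiff (vsmult q [:c:] (h u)) (g' (f x2))"
      unfolding x_def using u x2M M g'(2) x2(1) by (simp add: h_diff h_smult smod_smult)
    obtain w where w: "w \<in> Vn n" "vdiff cv (f x2) = vsmult q (sigma - 1) w"
      using x2(2) by (auto simp: submod_def)
    have "g' (vdiff cv (f x2)) = vsmult q (sigma - 1) (g' w)"
      using w g'_smult by simp
    then have ge0: "phi (g' (vdiff cv (f x2)) j) = 0" for j by simp
    have ge: "g' (vdiff cv (f x2)) = vdiff (vsmult q [:c:] (g' fu')) (g' (f x2))"
      using g'_diff[OF cvV fx2V] g'_smult[OF restrV[of "f u"]] by (simp add: cv_def fu'_def)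
    have "smult c (z j) = h x j - g' (vdiff cv (f x2)) j"
      by (simp add: z_def hx ge sm_const_left smult_diff_right algebra_simps)
    then show "phi (smult c (z j)) = 0" using hx0[of j] ge0[of j] by (simp add: phi_diff)
  qed
  define W where "W j = (SOME w. z j = sm a w)" for j
  have W: "z j = sm a (W j)" for j
    unfolding W_def using zdiv[of j] by (rule someI_ex)
  have WV: "W \<in> Vn m"
  proof -
    have "sm a (W j) = 0" if "j \<ge> m" for j using W[of j] zV that by (simp add: Vn_iff)
    then show ?thesis using anz by (simp add: Vn_iff sm_eq_0_iff)
  qed
  define g where "g y = vadd (g' (restr y)) (\<lambda>j. sm (y n) (W j))" for y
  have restr_add: "restr (vadd x y) = vadd (restr x) (restr y)" for x y
    by (auto simp: restr_def vadd_def)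
  have restr_smult: "restr (vsmult q r x) = vsmult q r (restr x)" for x r
    by (auto simp: restr_def vsmult_def)
  have ghom: "skew_hom q (Suc n) m g"
    unfolding skew_hom_def
  proof (intro conjI ballI allI)
    fix y :: "'a vec" assume "y \<in> Vn (Suc n)"
    show "g y \<in> Vn m" using g'V[OF restrV[of y]] WV by (simp add: g_def Vn_iff)
  next
    fix x y :: "'a vec" assume "x \<in> Vn (Suc n)" "y \<in> Vn (Suc n)"
    show "g (vadd x y) = vadd (g x) (g y)"
      unfolding g_def restr_add g'_add[OF restrV restrV]
      by (auto simp: vadd_def sm_add_left)
  next
    fix r and x :: "'a vec" assume "x \<in> Vn (Suc n)"
    show "g (vsmult q r x) = vsmult q r (g x)"
      unfolding g_def restr_smult g'_smult[OF restrV]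
      by (auto simp: vadd_def vsmult_def sm_add_right sm_assoc)
  qed
  have gf: "g (f x) = h x" if x: "x \<in> M" for x
  proof -
    obtain r where r: "pi x = sm r a" using dec[OF x] by blast
    define x2 where "x2 = vdiff x (vsmult q r u)"
    have x2M: "x2 \<in> M" unfolding x2_def by (intro smod_diff smod_smult M x u)
    have fx2: "f x2 = vdiff (f x) (vsmult q r (f u))"
      unfolding x2_def using x u M by (simp add: f_diff f_smult smod_smult)
    have "pi x2 = 0" using fx2 r by (simp add: pi_def a_def)
    then have x2N: "x2 \<in> N" using x2M by (simp add: N_def)
    have fx2V: "f x2 \<in> Vn n" using fVN x2N by blast
    have xeq: "x = vadd x2 (vsmult q r u)" by (auto simp: x2_def vadd_def vdiff_def)
    have fxeq: "f x = vadd (f x2) (vsmult q r (f u))" by (auto simp: fx2 vadd_def vdiff_def)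
    have g_add: "g (vadd y1 y2) = vadd (g y1) (g y2)" if "y1 \<in> Vn (Suc n)" "y2 \<in> Vn (Suc n)" for y1 y2
      using ghom that unfolding skew_hom_def by blast
    have g_smult: "g (vsmult q r' y) = vsmult q r' (g y)" if "y \<in> Vn (Suc n)" for y r'
      using ghom that unfolding skew_hom_def by blast
    have fuV: "f u \<in> Vn (Suc n)" using fVs[OF u(1)] .
    have "g (f x2) = h x2"
    proof -
      have "f x2 n = 0" using x2N by (simp add: N_def pi_def)
      then show ?thesis using g'(2) x2N by (simp add: g_def restr_id[OF fx2V] vadd_def)
    qed
    moreover have "g (f u) = h u"
    proof
      fix j
      have "h u j - g' fu' j = sm (f u n) (W j)" using W[of j] by (simp add: z_def a_def pi_def)
      then show "g (f u) j = h u j" by (simp add: g_def fu'_def[symmetric] algebra_simps)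
    qed
    ultimately have "g (f x) = vadd (h x2) (vsmult q r (h u))"
      unfolding fxeq using fVs[OF x2M] fuV
      by (simp add: g_add g_smult smod_smult[OF smod_Vn])
    also have "\<dots> = h x" using xeq h_add[OF x2M smod_smult[OF M u(1)]] h_smult[OF u(1)] by simp
    finally show ?thesis .
  qed
  have TM: "\<forall>y\<in>Vn (Suc n). \<exists>x\<in>M. vdiff y (f x) \<in> submod q (Suc n) (sigma - 1)"
  proof
    fix y :: "'a vec" assume y: "y \<in> Vn (Suc n)"
    obtain c where c: "poly (Pol a) c = phi (y n)" using Pol_surj[OF anz] by blast
    define x1 where "x1 = vsmult q [:c:] u"
    have x1M: "x1 \<in> M" unfolding x1_def by (intro smod_smult M u)
    have fx1: "f x1 = vsmult q [:c:] (f u)" unfolding x1_def using f_smult[OF u(1)] .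
    obtain x2 where x2: "x2 \<in> N" "vdiff (restr (vdiff y (f x1))) (f x2) \<in> submod q n (sigma - 1)"
      using TN restrV by blast
    have x2M: "x2 \<in> M" using x2 NM by blast
    have e0: "phi (restr (vdiff y (f x1)) j - f x2 j) = 0" for j
      using x2(2) by (simp add: submod_sigma1_iff)
    define x where "x = vadd x1 x2"
    have xM: "x \<in> M" unfolding x_def by (intro smod_add M x1M x2M)
    have fx: "f x = vadd (f x1) (f x2)" unfolding x_def using f_add[OF x1M x2M] .
    have "vdiff y (f x) \<in> submod q (Suc n) (sigma - 1)"
      unfolding submod_sigma1_iff
    proof
      show "vdiff y (f x) \<in> Vn (Suc n)" using y fVs[OF xM] by (auto simp: Vn_iff)
      show "\<forall>j. phi (vdiff y (f x) j) = 0"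
      proof
        fix j
        consider "j < n" | "j = n" | "j > n" by linarith
        then show "phi (vdiff y (f x) j) = 0"
        proof cases
          case 1
          then show ?thesis using e0[of j] by (simp add: fx restr_def algebra_simps)
        next
          case 2
          have "f x2 n = 0" using x2(1) by (simp add: N_def pi_def)
          then show ?thesis using 2 c
            by (simp add: fx fx1 sm_const_left a_def pi_def phi_diff phi_smult)
        next
          case 3
          have "y j = 0" "f x j = 0" using 3 y fVs[OF xM] by (auto simp: Vn_iff)
          then show ?thesis by simp
        qed
      qed
    qed
    then show "\<exists>x\<in>M. vdiff y (f x) \<in> submod q (Suc n) (sigma - 1)" using xM by blast
  qed
  show ?case using ghom gf TM by blast
qed

end


context skw begin

lemma sigma_nz: "(sigma :: 'a poly) \<noteq> 0" by (simp add: sigma_def)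
lemma degree_sigma: "degree (sigma :: 'a poly) = 1" by (simp add: sigma_def degree_monom_eq)

definition mu :: "nat \<Rightarrow> 'a vec \<Rightarrow> nat" where
  "mu m v = (\<Sum>j<m. if v j = 0 then 0 else Suc (degree (v j)))"

lemma mu_sigma:
  assumes "v \<in> Vn m" "v \<noteq> (\<lambda>_. 0)"
  shows "mu m v < mu m (vsmult q sigma v)"
proof -
  obtain j where j: "v j \<noteq> 0" using assms(2) by auto
  then have jm: "j < m" using assms(1) by (auto simp: Vn_iff not_less[symmetric])
  have t: "(if v i = 0 then 0 else Suc (degree (v i))) <
           (if sm sigma (v i) = 0 then 0 else Suc (degree (sm sigma (v i))))" if "v i \<noteq> 0" for i
    using that sm_degree[OF sigma_nz that] degree_sigma by simp
  have t': "(if v i = 0 then 0 else Suc (degree (v i))) \<le>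
           (if sm sigma (v i) = 0 then 0 else Suc (degree (sm sigma (v i))))" for i
    using t[of i] by (cases "v i = 0") auto
  show ?thesis unfolding mu_def
  proof (rule sum_strict_mono_ex1)
    show "\<forall>i\<in>{..<m}. (if v i = 0 then 0 else Suc (degree (v i))) \<le>
           (if vsmult q sigma v i = 0 then 0 else Suc (degree (vsmult q sigma v i)))"
      by (intro ballI) (simp only: vsmult_app t')
    show "\<exists>i\<in>{..<m}. (if v i = 0 then 0 else Suc (degree (v i))) <
           (if vsmult q sigma v i = 0 then 0 else Suc (degree (vsmult q sigma v i)))"
    proof (rule bexI[of _ j])
      show "(if v j = 0 then 0 else Suc (degree (v j))) <
           (if vsmult q sigma v j = 0 then 0 else Suc (degree (vsmult q sigma v j)))"
        using t[OF j] by (simp only: vsmult_app)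
    qed (use jm in simp)
  qed simp
qed

lemma uniq:
  fixes f g g' :: "'a vec \<Rightarrow> 'a vec"
  assumes g: "skew_hom q n m g" and g': "skew_hom q n m g'"
    and fV: "\<forall>x\<in>Vn n. f x \<in> Vn n"
    and eq: "\<forall>x\<in>Vn n. g' (f x) = g (f x)"
    and S: "\<forall>y\<in>Vn n. \<exists>x\<in>Vn n. vdiff y (f x) \<in> submod q n sigma"
  shows "\<forall>y\<in>Vn n. g' y = g y"
proof -
  define D where "D y = vdiff (g' y) (g y)" for y
  have DV: "D y \<in> Vn m" if "y \<in> Vn n" for y
    using hom_maps[OF g that] hom_maps[OF g' that] by (auto simp: D_def Vn_iff)
  have key: "\<exists>y''\<in>Vn n. D y = vsmult q sigma (D y'')" if y: "y \<in> Vn n" for y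
  proof -
    obtain x where x: "x \<in> Vn n" "vdiff y (f x) \<in> submod q n sigma" using S y by blast
    then obtain y'' where y'': "y'' \<in> Vn n" "vdiff y (f x) = vsmult q sigma y''"
      by (auto simp: submod_def)
    have yeq: "y = vadd (f x) (vsmult q sigma y'')"
    proof
      fix j show "y j = vadd (f x) (vsmult q sigma y'') j"
        using fun_cong[OF y''(2), of j] by (simp add: algebra_simps)
    qed
    have fxV: "f x \<in> Vn n" using fV x by blast
    have sV: "vsmult q sigma y'' \<in> Vn n" using smod_smult[OF smod_Vn y''(1)] .
    have "g' y = vadd (g' (f x)) (vsmult q sigma (g' y''))"
      by (subst yeq) (simp add: slin_add[OF hom_slin[OF g'] fxV sV] slin_smult[OF hom_slin[OF g'] y''(1)])
    moreover have "g y = vadd (g (f x)) (vsmult q sigma (g y''))"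
      by (subst yeq) (simp add: slin_add[OF hom_slin[OF g] fxV sV] slin_smult[OF hom_slin[OF g] y''(1)])
    ultimately have "D y = vsmult q sigma (D y'')"
      using eq x(1) by (intro ext) (simp add: D_def sm_diff_right)
    then show ?thesis using y'' by blast
  qed
  have D0: "D y = (\<lambda>_. 0)" if "y \<in> Vn n" for y
    using that
  proof (induction "mu m (D y)" arbitrary: y rule: less_induct)
    case less
    obtain y'' where y'': "y'' \<in> Vn n" "D y = vsmult q sigma (D y'')"
      using key[OF less.prems] by blast
    show ?case
    proof (cases "D y'' = (\<lambda>_. 0)")
      case True
      then show ?thesis using y'' by (simp add: vsmult_def)
    next
      case False
      then have "mu m (D y'') < mu m (D y)"
        using mu_sigma[OF DV[OF y''(1)] False] y''(2) by simp
      then have "D y'' = (\<lambda>_. 0)" using less.hyps y''(1) by blast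
      with False show ?thesis by blast
    qed
  qed
  show ?thesis
  proof (intro ballI ext)
    fix y :: "'a vec" and j assume "y \<in> Vn n"
    then show "g' y j = g y j" using fun_cong[OF D0, of y j] by (simp add: D_def)
  qed
qed

end


lemma CHAR_fract [simp]: "CHAR('a::idom fract) = CHAR('a)"
proof (rule CHAR_eqI)
  have "of_nat CHAR('a) = (Fract (of_nat CHAR('a)) 1 :: 'a fract)" by (rule of_nat_fract)
  also have "\<dots> = 0" by (simp add: Zero_fract_def eq_fract)
  finally show "of_nat CHAR('a) = (0 :: 'a fract)" .
next
  fix x assume "of_nat x = (0 :: 'a fract)"
  then have "Fract (of_nat x) 1 = (Fract 0 1 :: 'a fract)" by (simp add: of_nat_fract Zero_fract_def)
  then have "of_nat x = (0 :: 'a)" by (simp add: eq_fract)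
  then show "CHAR('a) dvd x" by (simp add: of_nat_eq_0_iff_char_dvd)
qed

lemma CHAR_kbar: "CHAR('f::field kbar) = CHAR('f)"
  by (simp add: CHAR_fract)

lemma finite_field_pow_card:
  fixes x :: "'f::{field,finite}"
  shows "x ^ card (UNIV :: 'f set) = x"
proof (cases "x = 0")
  case False
  have "x * (\<Prod>y\<in>UNIV-{0}. x * y) = x * x ^ (card (UNIV :: 'f set) - 1) * \<Prod>(UNIV-{0})"
    by (simp add: prod.distrib mult_ac)
  also have "x * x ^ (card (UNIV :: 'f set) - 1) = x ^ Suc (card (UNIV :: 'f set) - 1)"
    by (subst power_Suc) auto
  also have "Suc (card (UNIV :: 'f set) - 1) = card (UNIV :: 'f set)"
    using finite_UNIV_card_ge_0[where ?'a = 'f] by simp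
  also have "(\<Prod>y\<in>UNIV-{0}. x * y) = (\<Prod>y\<in>UNIV-{0}. y)"
    by (rule prod.reindex_bij_witness[of _ "\<lambda>y. y / x" "\<lambda>y. x * y"]) (use False in auto)
  finally show ?thesis
    by simp
qed (use finite_UNIV_card_ge_0[where ?'a = 'f] in auto)

lemma coeff_lin_pow_1: "coeff ([:1, 1:] ^ n) (Suc 0) = (of_nat n :: 'a::comm_ring_1)"
proof (induction n)
  case (Suc n)
  have c0: "coeff ([:1, 1:] ^ n) 0 = (1::'a)"
    by (simp add: coeff_0_power)
  show ?case using Suc c0 by (simp add: coeff_pCons)
qed simp

lemma card_ge2: "card (UNIV :: 'f::{field,finite} set) \<ge> 2"
proof -
  have "card {0, 1 :: 'f} \<le> card (UNIV :: 'f set)" by (rule card_mono) auto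
  then show ?thesis by simp
qed

lemma card_prime_power:
  "\<exists>k>0. card (UNIV :: 'f::{field,finite} set) = CHAR('f) ^ k"
proof -
  define p where "p = CHAR('f)"
  define q where "q = card (UNIV :: 'f set)"
  have ppos: "p > 0" unfolding p_def by (rule finite_imp_CHAR_pos) simp
  have pprime: "prime p" unfolding p_def using ppos[unfolded p_def] by (rule prime_CHAR_semidom)
  have q2: "q \<ge> 2" unfolding q_def by (rule card_ge2)
  obtain m where qm: "q = p ^ multiplicity p q * m" and pm: "\<not> p dvd m"
    using multiplicity_decompose'[of q p] q2 pprime by (metis not_prime_unit not_numeral_le_zero)
  define a where "a = multiplicity p q"
  have qa: "q = p ^ a * m" using qm by (simp only: a_def[symmetric])
  define F where "F x = x ^ (p ^ a)" for x :: 'f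
  have Fadd: "F (x + y) = F x + F y" for x y
    unfolding F_def by (rule freshmans_dream') (use pprime p_def in auto)
  have Finj: "inj F"
  proof (rule injI)
    fix x y assume "F x = F y"
    have "F (x - y) + F y = F x" using Fadd[of "x - y" y] by simp
    then have "F (x - y) = 0" using \<open>F x = F y\<close> by simp
    then show "x = y" by (simp add: F_def)
  qed
  have Fsurj: "surj F" using finite_UNIV_inj_surj[OF _ Finj] by simp
  have mid: "(1 + u) ^ m = 1 + u ^ m" for u :: 'f
  proof -
    obtain x where x: "u = F x" using Fsurj by (metis surjD)
    have F1: "F 1 = 1" by (simp add: F_def)
    have "(1 + u) ^ m = F (1 + x) ^ m" using Fadd[of 1 x] F1 x by simp
    also have "\<dots> = (1 + x) ^ q" by (simp only: F_def qa power_mult)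
    also have "\<dots> = 1 + x" unfolding q_def by (rule finite_field_pow_card)
    also have "\<dots> = 1 + F x ^ m"
      using finite_field_pow_card[of x] unfolding q_def[symmetric] qa by (simp add: F_def power_mult)
    finally show ?thesis using x by simp
  qed
  have m1: "m = 1"
  proof (rule ccontr)
    assume "m \<noteq> 1"
    moreover have "m \<noteq> 0" using qa q2 by (cases "m = 0") auto
    ultimately have m2: "m \<ge> 2" by simp
    define P :: "'f poly" where "P = [:1, 1:] ^ m - 1 - monom 1 m"
    have roots: "poly P u = 0" for u using mid[of u] by (simp add: P_def poly_monom)
    have "coeff P 1 = of_nat m" using m2 by (simp add: P_def coeff_lin_pow_1 coeff_monom)
    moreover have "of_nat m \<noteq> (0::'f)" using pm by (simp add: of_nat_eq_0_iff_char_dvd p_def)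
    ultimately have Pnz: "P \<noteq> 0" by auto
    have dP: "degree P \<le> m - 1"
    proof (rule degree_le, intro allI impI)
      fix i assume i: "m - 1 < i"
      have dpow: "degree ([:1, 1:] ^ m :: 'f poly) \<le> m"
        using degree_power_le[of "[:1, 1:] :: 'f poly" m] by simp
      show "coeff P i = 0"
      proof (cases "i = m")
        case True
        then show ?thesis using m2 by (simp add: P_def coeff_linear_power)
      next
        case False
        then have "i > m" using i by simp
        then show ?thesis using dpow m2 by (simp add: P_def coeff_eq_0 coeff_monom)
      qed
    qed
    have "card (UNIV :: 'f set) \<le> card {x. poly P x = 0}" using roots by simp
    also have "\<dots> \<le> degree P" by (rule card_poly_roots_bound[OF Pnz])
    finally have "q \<le> m - 1" using dP by (simp add: q_def)
    moreover have "m \<le> q" using qa ppos by simp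
    ultimately show False using m2 by simp
  qed
  have "q = p ^ a" using qa m1 by simp
  moreover have "a > 0" using q2 \<open>q = p ^ a\<close> by (cases a) auto
  ultimately show ?thesis by (auto simp: q_def p_def)
qed

lemma skw_kbar: "skw TYPE('f kbar) (card (UNIV :: 'f::{field,finite} set))"
proof -
  obtain k where k: "k > 0" "card (UNIV :: 'f set) = CHAR('f) ^ k" using card_prime_power by blast
  have ppos: "CHAR('f) > 0" by (rule finite_imp_CHAR_pos) simp
  have pprime: "prime CHAR('f kbar)" using prime_CHAR_semidom[OF ppos] by (simp add: CHAR_kbar)
  show ?thesis
  proof
    show "card (UNIV :: 'f set) > 1" using card_ge2[where 'f = 'f] by simp
    show "(x + y) ^ card (UNIV :: 'f set) = x ^ card (UNIV :: 'f set) + y ^ card (UNIV :: 'f set)"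
      for x y :: "'f kbar"
      by (rule freshmans_dream'[OF pprime]) (simp add: k CHAR_kbar)
    show "of_nat (card (UNIV :: 'f set)) = (0 :: 'f kbar)"
      using k by (simp add: of_nat_eq_0_iff_char_dvd CHAR_kbar)
  qed
qed



theorem lemma4:
  fixes f1 f2 :: "(nat \<Rightarrow> ('f::{field,finite}) kbar poly) \<Rightarrow> (nat \<Rightarrow> 'f kbar poly)"
    and n :: nat
  assumes hom1: "skew_hom (card (UNIV :: 'f set)) n n f1"
    and hom2: "skew_hom (card (UNIV :: 'f set)) n n f2"
    and bij1: "mod_bij (card (UNIV :: 'f set)) n n sigma f1"
    and ker: "mod_ker_sub (card (UNIV :: 'f set)) n n n (sigma - 1) f1 f2"
  shows "\<exists>g. skew_hom (card (UNIV :: 'f set)) n n g \<and> (\<forall>x\<in>Vn n. g (f1 x) = f2 x) \<and>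
           (\<forall>g'. skew_hom (card (UNIV :: 'f set)) n n g' \<and> (\<forall>x\<in>Vn n. g' (f1 x) = f2 x) \<longrightarrow>
                  (\<forall>y\<in>Vn n. g' y = g y))"
proof -
  interpret skw "card (UNIV :: 'f set)" "TYPE('f kbar)" by (rule skw_kbar)
  have S: "\<forall>y\<in>Vn n. \<exists>x\<in>Vn n. vdiff y (f1 x) \<in> submod (card (UNIV :: 'f set)) n sigma"
    using bij1 unfolding mod_bij_def by blast
  have K: "\<forall>x\<in>Vn n. f1 x \<in> submod (card (UNIV :: 'f set)) n (sigma - 1) \<longrightarrow>
      f2 x \<in> submod (card (UNIV :: 'f set)) n (sigma - 1)"
    using ker unfolding mod_ker_sub_def by blast
  have f1V: "\<forall>x\<in>Vn n. f1 x \<in> Vn n" using hom1 unfolding skew_hom_def by blast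
  have f2V: "\<forall>x\<in>Vn n. f2 x \<in> Vn n" using hom2 unfolding skew_hom_def by blast
  obtain g where g: "skew_hom (card (UNIV :: 'f set)) n n g" "\<forall>x\<in>Vn n. g (f1 x) = f2 x"
    using main[OF smod_Vn hom_slin[OF hom1] hom_slin[OF hom2] f1V f2V S K] by blast
  have "\<forall>g'. skew_hom (card (UNIV :: 'f set)) n n g' \<and> (\<forall>x\<in>Vn n. g' (f1 x) = f2 x) \<longrightarrow>
                  (\<forall>y\<in>Vn n. g' y = g y)"
  proof (intro allI impI, elim conjE)
    fix g' assume g': "skew_hom (card (UNIV :: 'f set)) n n g'" "\<forall>x\<in>Vn n. g' (f1 x) = f2 x"
    show "\<forall>y\<in>Vn n. g' y = g y"
      by (rule uniq[OF g(1) g'(1) f1V]) (use g(2) g'(2) S in auto)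
  qed
  then show ?thesis using g by blast
qed



end
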